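(* Let $f$ and $g$ be completely multiplicative functions with $|f(n)|,|g(n)|\le1$ for all $n$, suppose $\mathbb{D}_\beta(f,g)<\infty$ for some $\beta>0$, and let $h$ be defined by $g=f*h$. Then the series $\sum_{n=1}^\infty\frac{|h(n)|^2}{n^\beta}$ is convergent.
   Context: $(f*h)(n)=\sum_{dm=n}f(d)h(m)$. $\mathbb{D}_\beta(f,g)^2:=\sum_p \frac{1-\Re(f(p)\overline{g(p)})}{p^\beta}$ (sum over primes). *)

theory Defs
  imports "HOL-Analysis.Analysis" "HOL-Computational_Algebra.Primes"
begin

text \<open>Arithmetic functions are maps nat => complex; only arguments n >= 1 matter.\<close>

definition completely_multiplicative :: "(nat \<Rightarrow> complex) \<Rightarrow> bool" where
  "completely_multiplicative f \<longleftrightarrow>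
     f 1 = 1 \<and> (\<forall>m n. m > 0 \<longrightarrow> n > 0 \<longrightarrow> f (m * n) = f m * f n)"

definition dirichlet_conv :: "(nat \<Rightarrow> complex) \<Rightarrow> (nat \<Rightarrow> complex) \<Rightarrow> nat \<Rightarrow> complex" where
  "dirichlet_conv f h n = (\<Sum>d | d dvd n. f d * h (n div d))"

text \<open>The summand of D_beta(f,g)^2 at a prime p.\<close>
definition pretent_term :: "real \<Rightarrow> (nat \<Rightarrow> complex) \<Rightarrow> (nat \<Rightarrow> complex) \<Rightarrow> nat \<Rightarrow> real" where
  "pretent_term \<beta> f g p = (1 - Re (f p * cnj (g p))) / real p powr \<beta>"

definition pretent_dist_finite :: "real \<Rightarrow> (nat \<Rightarrow> complex) \<Rightarrow> (nat \<Rightarrow> complex) \<Rightarrow> bool" where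
  "pretent_dist_finite \<beta> f g \<longleftrightarrow> pretent_term \<beta> f g summable_on {p. prime p}"

end

theory Submission
  imports Defs
begin

lemma divisors_mult_coprime:
  fixes a b :: nat
  shows "{d. d dvd a*b} = (\<lambda>(x,y). x*y) ` ({d. d dvd a} \<times> {d. d dvd b})"
proof
  show "{d. d dvd a*b} \<subseteq> (\<lambda>(x,y). x*y) ` ({d. d dvd a} \<times> {d. d dvd b})"
  proof
    fix d assume "d \<in> {d. d dvd a*b}"
    then obtain x y where "d = x*y" "x dvd a" "y dvd b" using division_decomp[of d a b] by auto
    then show "d \<in> (\<lambda>(x,y). x*y) ` ({d. d dvd a} \<times> {d. d dvd b})" by auto
  qed
qed (auto intro: mult_dvd_mono)

lemma gcd_aux: fixes x y a b :: nat assumes "coprime a b" "x dvd a" "y dvd b"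
  shows "gcd (x*y) a = x"
  by (metis assms(1,2,3) coprime_mult_right_iff dvd_mult_div_cancel
    gcd_mult_left_right_cancel gcd_nat.order_iff)

lemma inj_mult_coprime: fixes a b :: nat assumes "coprime a b"
  shows "inj_on (\<lambda>(x,y). x*y) ({d. d dvd a} \<times> {d. d dvd b})"
proof (rule inj_onI, clarsimp)
  fix x y x' y' assume h: "x dvd a" "y dvd b" "x' dvd a" "y' dvd b" "x*y = x'*y'"
  have "x = x'" using gcd_aux[OF assms h(1,2)] gcd_aux[OF assms h(3,4)] h(5) by simp
  moreover have "y = y'" using gcd_aux[of b a y x] gcd_aux[of b a y' x'] h assms
    by (metis coprime_commute mult.commute)
  ultimately show "x = x' \<and> y = y'" by simp
qed

lemma sum_divisors_coprime:
  fixes a b :: nat and F :: "nat \<Rightarrow> 'c::comm_monoid_add"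
  assumes "coprime a b" "a > 0" "b > 0"
  shows "(\<Sum>d | d dvd a*b. F d) = (\<Sum>(x,y)\<in>{d. d dvd a} \<times> {d. d dvd b}. F (x*y))"
  unfolding divisors_mult_coprime[of a b]
  by (subst sum.reindex[OF inj_mult_coprime[OF assms(1)]]) (simp add: case_prod_unfold)

lemma h_one:
  assumes "completely_multiplicative f" "g 1 = dirichlet_conv f h 1" "completely_multiplicative g"
  shows "h 1 = 1"
  using assms by (simp add: dirichlet_conv_def completely_multiplicative_def)

lemma h_mult:
  fixes f g h :: "nat \<Rightarrow> complex"
  assumes cf: "completely_multiplicative f" and cg: "completely_multiplicative g"
    and conv: "\<And>n. n > 0 \<Longrightarrow> g n = dirichlet_conv f h n"
  shows "coprime a b \<Longrightarrow> a > 0 \<Longrightarrow> b > 0 \<Longrightarrow> h (a*b) = h a * h b"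
proof (induction "a*b" arbitrary: a b rule: less_induct)
  case (less a b)
  define A where "A = {d::nat. d dvd a}"
  define B where "B = {d::nat. d dvd b}"
  have fA: "finite A" unfolding A_def using less.prems by (simp add: finite_divisors_nat)
  have fB: "finite B" unfolding B_def using less.prems by (simp add: finite_divisors_nat)
  define S where "S = (\<lambda>(x,y). f x * f y * h ((a div x) * (b div y)))"
  define T where "T = (\<lambda>(x,y). f x * f y * (h (a div x) * h (b div y)))"
  have fm: "f (x*y) = f x * f y" if "x > 0" "y > 0" for x y
    using cf that by (simp add: completely_multiplicative_def)
  have gm: "g (a*b) = g a * g b"
    using cg less.prems by (simp add: completely_multiplicative_def)
  have 1: "g (a*b) = (\<Sum>p\<in>A\<times>B. S p)"
  proof -
    have "g (a*b) = (\<Sum>d | d dvd a*b. f d * h (a*b div d))"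
      using conv[of "a*b"] less.prems by (simp add: dirichlet_conv_def)
    also have "\<dots> = (\<Sum>(x,y)\<in>A\<times>B. f (x*y) * h (a*b div (x*y)))"
      unfolding A_def B_def by (rule sum_divisors_coprime[OF less.prems])
    also have "\<dots> = (\<Sum>p\<in>A\<times>B. S p)"
    proof (rule sum.cong, simp, clarsimp simp: S_def)
      fix x y assume "x \<in> A" "y \<in> B"
      then have "x dvd a" "y dvd b" "x > 0" "y > 0" using less.prems by (auto simp: A_def B_def intro: Nat.gr0I)
      then show "f (x*y) * h (a*b div (x*y)) = f x * f y * h (a div x * (b div y))"
        by (simp add: fm div_mult_div_if_dvd)
    qed
    finally show ?thesis .
  qed
  have 2: "g a * g b = (\<Sum>p\<in>A\<times>B. T p)"
  proof -
    have "g a = (\<Sum>x\<in>A. f x * h (a div x))" using conv[of a] less.prems by (simp add: dirichlet_conv_def A_def)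
    moreover have "g b = (\<Sum>y\<in>B. f y * h (b div y))" using conv[of b] less.prems by (simp add: dirichlet_conv_def B_def)
    ultimately have "g a * g b = (\<Sum>x\<in>A. \<Sum>y\<in>B. (f x * h (a div x)) * (f y * h (b div y)))"
      by (simp add: sum_product)
    also have "\<dots> = (\<Sum>p\<in>A\<times>B. T p)"
      by (simp add: sum.cartesian_product T_def case_prod_unfold algebra_simps)
    finally show ?thesis .
  qed
  have 3: "S p = T p" if "p \<in> A\<times>B - {(1,1)}" for p
  proof -
    obtain x y where p0: "p = (x,y)" by (cases p)
    then have p: "p = (x,y)" "x dvd a" "y dvd b" "(x,y) \<noteq> (1,1)"
      using that by (auto simp: A_def B_def)
    have xy: "x > 0" "y > 0" using p less.prems by (auto intro: Nat.gr0I)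
    have ea: "a = x * (a div x)" "b = y * (b div y)" using p by auto
    have pos: "a div x > 0" "b div y > 0" using ea less.prems by (auto intro: Nat.gr0I)
    have "x*y \<noteq> 1" using p(4) by simp
    then have xy1: "x*y > 1" using xy by (metis less_one nat_neq_iff nat_0_less_mult_iff)
    have eab: "a*b = (x*y) * ((a div x) * (b div y))" using ea by (metis mult.assoc mult.left_commute)
    have m0: "(a div x) * (b div y) > 0" using pos by simp
    have lt: "(a div x) * (b div y) < a*b" unfolding eab using xy1 m0 by simp
    have cop: "coprime (a div x) (b div y)"
      using less.prems(1) ea coprime_mult_left_iff coprime_mult_right_iff by metis
    show ?thesis using less.hyps[OF lt cop pos] p by (simp add: S_def T_def)
  qed
  have mem: "(1,1) \<in> A \<times> B" by (simp add: A_def B_def)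
  have fAB: "finite (A\<times>B)" using fA fB by simp
  have "S (1,1) + (\<Sum>p\<in>A\<times>B - {(1,1)}. S p) = T (1,1) + (\<Sum>p\<in>A\<times>B - {(1,1)}. T p)"
    using 1 2 gm sum.remove[OF fAB mem, of S] sum.remove[OF fAB mem, of T] by simp
  moreover have "(\<Sum>p\<in>A\<times>B - {(1,1)}. S p) = (\<Sum>p\<in>A\<times>B - {(1,1)}. T p)"
    using 3 by (rule sum.cong[OF refl])
  ultimately have "S (1,1) = T (1,1)" by simp
  then show ?case using cf by (simp add: S_def T_def completely_multiplicative_def)
qed

lemma cm_power: assumes "completely_multiplicative f" "m > 0"
  shows "f (m^j) = f m ^ j"
  using assms by (induction j) (auto simp: completely_multiplicative_def)

lemma geo_conv:
  fixes F G :: complex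
  shows "(\<Sum>j\<le>n. F^j * (if n - j = 0 then 1 else G^(n-j-1)*(G-F))) = G^n"
proof (induction n)
  case 0 then show ?case by simp
next
  case (Suc n)
  have "(\<Sum>j\<le>Suc n. F^j * (if Suc n - j = 0 then 1 else G^(Suc n-j-1)*(G-F)))
      = G^n*(G-F) + (\<Sum>j\<le>n. F^(Suc j) * (if n - j = 0 then 1 else G^(n-j-1)*(G-F)))"
    by (subst sum.atMost_Suc_shift) (auto intro!: sum.cong)
  also have "\<dots> = G^n*(G-F) + F * G^n"
    using Suc by (simp add: sum_distrib_left[symmetric] mult.assoc)
  also have "\<dots> = G^Suc n" by (simp add: algebra_simps)
  finally show ?case .
qed

lemma conv_primepow:
  fixes f h :: "nat \<Rightarrow> complex"
  assumes cf: "completely_multiplicative f" and p: "prime p"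
  shows "dirichlet_conv f h (p^n) = (\<Sum>j\<le>n. f p ^ j * h (p^(n-j)))"
proof -
  have p0: "p > 1" using p prime_gt_1_nat by blast
  have D: "{d. d dvd p^n} = (\<lambda>j. p^j) ` {..n}"
    using divides_primepow_nat[OF p] by auto
  have inj: "inj_on (\<lambda>j. p^j) {..n}" using p0 by (auto intro!: inj_onI simp: power_inject_exp)
  show ?thesis
    unfolding dirichlet_conv_def D sum.reindex[OF inj]
    using p0 by (intro sum.cong) (auto simp: cm_power[OF cf] power_diff)
qed

lemma h_primepow:
  fixes f g h :: "nat \<Rightarrow> complex"
  assumes cf: "completely_multiplicative f" and cg: "completely_multiplicative g"
    and conv: "\<And>n. n > 0 \<Longrightarrow> g n = dirichlet_conv f h n" and p: "prime p"
  shows "h (p^n) = (if n = 0 then 1 else g p ^ (n-1) * (g p - f p))"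
proof (induction n rule: less_induct)
  case (less n)
  define c where "c = (\<lambda>k::nat. if k = 0 then 1 else g p ^ (k-1) * (g p - f p))"
  have p0: "p > 0" using p prime_gt_0_nat by blast
  show ?case
  proof (cases n)
    case 0 then show ?thesis using h_one[OF cf _ cg] conv[of 1] by simp
  next
    case (Suc m)
    have "(\<Sum>j\<le>n. f p ^ j * h (p^(n-j))) = g (p^n)"
      using conv[of "p^n"] p0 conv_primepow[OF cf p, of h n] by simp
    also have "\<dots> = g p ^ n" using cm_power[OF cg p0] by simp
    also have "\<dots> = (\<Sum>j\<le>n. f p ^ j * c (n-j))" using geo_conv[of "f p" n "g p"] by (simp add: c_def)
    finally have E: "(\<Sum>j\<le>n. f p ^ j * h (p^(n-j))) = (\<Sum>j\<le>n. f p ^ j * c (n-j))" .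
    have "(\<Sum>j\<le>m. f p ^ Suc j * h (p^(n - Suc j))) = (\<Sum>j\<le>m. f p ^ Suc j * c (n - Suc j))"
      using less Suc by (intro sum.cong) (auto simp: c_def)
    moreover have "(\<Sum>j\<le>n. f p ^ j * h (p^(n-j))) = h (p^n) + (\<Sum>j\<le>m. f p ^ Suc j * h (p^(n - Suc j)))"
      unfolding Suc by (rule trans[OF sum.atMost_Suc_shift]) simp
    moreover have "(\<Sum>j\<le>n. f p ^ j * c (n-j)) = c n + (\<Sum>j\<le>m. f p ^ Suc j * c (n - Suc j))"
      unfolding Suc by (rule trans[OF sum.atMost_Suc_shift]) simp
    ultimately have "h (p^n) = c n" using E by simp
    then show ?thesis by (simp add: c_def)
  qed
qed

lemma power_powr: fixes x b :: real assumes "x > 0" shows "(x^k) powr b = (x powr b)^k"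
proof -
  have "(x^k) powr b = (x powr real k) powr b" using powr_realpow[OF assms] by simp
  also have "\<dots> = x powr (real k * b)" by (simp add: powr_powr)
  also have "\<dots> = (x powr b)^k" using assms by (simp add: powr_power)
  finally show ?thesis .
qed

lemma euler_bound:
  fixes H :: "nat \<Rightarrow> real"
  assumes nn: "\<And>n. H n \<ge> 0" and H1: "H 1 = 1"
    and mult: "\<And>a b. coprime a b \<Longrightarrow> a > 0 \<Longrightarrow> b > 0 \<Longrightarrow> H (a*b) = H a * H b"
  shows "(\<Sum>n\<in>{n. 0 < n \<and> n \<le> N \<and> (\<forall>q. prime q \<longrightarrow> q dvd n \<longrightarrow> q \<le> m)}. H n)
           \<le> (\<Prod>p\<in>{p. prime p \<and> p \<le> m}. \<Sum>k\<le>N. H (p^k))"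
proof (induction m)
  case 0
  have sub: "{n. 0 < n \<and> n \<le> N \<and> (\<forall>q. prime q \<longrightarrow> q dvd n \<longrightarrow> q \<le> 0)} \<subseteq> {1}"
  proof
    fix n assume n: "n \<in> {n. 0 < n \<and> n \<le> N \<and> (\<forall>q. prime q \<longrightarrow> q dvd n \<longrightarrow> q \<le> (0::nat))}"
    show "n \<in> {1}"
    proof (rule ccontr)
      assume "n \<notin> {1}"
      then obtain q where "prime q" "q dvd n" using prime_factor_nat[of n] by auto
      then show False using n prime_gt_0_nat[of q] by auto
    qed
  qed
  have "(\<Sum>n\<in>{n. 0 < n \<and> n \<le> N \<and> (\<forall>q. prime q \<longrightarrow> q dvd n \<longrightarrow> q \<le> 0)}. H n) \<le> (\<Sum>n\<in>{1}. H n)"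
    by (rule sum_mono2[OF _ sub]) (auto simp: nn)
  also have "\<dots> = 1" using H1 by simp
  finally have X: "(\<Sum>n\<in>{n. 0 < n \<and> n \<le> N \<and> (\<forall>q. prime q \<longrightarrow> q dvd n \<longrightarrow> q \<le> 0)}. H n) \<le> 1" .
  have E: "{p::nat. prime p \<and> p \<le> 0} = {}" by auto
  show ?case unfolding E prod.empty by (rule X)
next
  case (Suc m)
  define T where "T = {n. 0 < n \<and> n \<le> N \<and> (\<forall>q. prime q \<longrightarrow> q dvd n \<longrightarrow> q \<le> m)}"
  define T' where "T' = {n. 0 < n \<and> n \<le> N \<and> (\<forall>q. prime q \<longrightarrow> q dvd n \<longrightarrow> q \<le> Suc m)}"
  have finT: "finite T" unfolding T_def by (rule finite_subset[of _ "{..N}"]) auto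
  have Pnn: "0 \<le> (\<Prod>p\<in>{p. prime p \<and> p \<le> m}. \<Sum>k\<le>N. H (p^k))"
    by (intro prod_nonneg sum_nonneg) (simp add: nn)
  show ?case
  proof (cases "prime (Suc m)")
    case False
    have "T' = T" unfolding T_def T'_def using False by (auto simp: le_Suc_eq)
    moreover have "{p. prime p \<and> p \<le> Suc m} = {p. prime p \<and> p \<le> m}" using False by (auto simp: le_Suc_eq)
    ultimately show ?thesis using Suc.IH by (simp add: T_def T'_def)
  next
    case True
    define p where "p = Suc m"
    have pp: "prime p" using True by (simp add: p_def)
    have p1: "p > 1" using pp prime_gt_1_nat by blast
    define K where "K = {..N}"
    define \<phi> where "\<phi> = (\<lambda>(k::nat,r::nat). p^k * r)"
    have ndvd: "\<not> p dvd r" if "r \<in> T" for r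
    proof
      assume "p dvd r"
      then have "p \<le> m" using that pp unfolding T_def by blast
      then show False by (simp add: p_def)
    qed
    have sub: "T' \<subseteq> \<phi> ` (K \<times> T)"
    proof
      fix n assume n: "n \<in> T'"
      then have n0: "n > 0" "n \<le> N" by (auto simp: T'_def)
      obtain r where r: "n = p ^ multiplicity p n * r" "\<not> p dvd r"
        using multiplicity_decompose'[of n p] n0 p1 by auto
      define k where "k = multiplicity p n"
      have r0: "r > 0" using r n0 by (auto intro: Nat.gr0I)
      have "p^k \<le> p^k * r" using r0 by simp
      then have "p^k \<le> n" using r by (simp add: k_def)
      moreover have "k < p^k"
      proof -
        have "k < 2^k" by simp
        also have "(2::nat)^k \<le> p^k" using p1 by (intro power_mono) auto
        finally show ?thesis .
      qed
      ultimately have kN: "k \<le> N" using n0 by linarith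
      have "r \<le> p^k * r" using p1 by simp
      then have "r \<le> n" using r by (simp add: k_def)
      moreover have "q \<le> m" if "prime q" "q dvd r" for q
      proof -
        have "q dvd n" by (subst r(1)) (rule dvd_mult[OF that(2)])
        then have "q \<le> Suc m" using n that by (auto simp: T'_def)
        moreover have "q \<noteq> p" using that r by auto
        ultimately show ?thesis by (simp add: p_def)
      qed
      ultimately have "r \<in> T" using r0 n0 by (auto simp: T_def)
      then show "n \<in> \<phi> ` (K \<times> T)" using kN r unfolding \<phi>_def K_def k_def by force
    qed
    have inj: "inj_on \<phi> (K \<times> T)"
    proof (rule inj_onI, clarsimp simp: \<phi>_def)
      fix k r k' r' assume a: "k \<in> K" "r \<in> T" "k' \<in> K" "r' \<in> T" "p^k * r = p^k' * r'"
      have "k = multiplicity p (p^k * r)" using ndvd[OF a(2)] p1 by (intro multiplicity_decomposeI[symmetric]) auto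
      also have "\<dots> = k'" using ndvd[OF a(4)] p1 a(5) by (intro multiplicity_decomposeI) auto
      finally have "k = k'" .
      then show "k = k' \<and> r = r'" using a(5) p1 by simp
    qed
    have finKT: "finite (K \<times> T)" using finT by (simp add: K_def)
    have "(\<Sum>n\<in>T'. H n) \<le> (\<Sum>n\<in>\<phi> ` (K \<times> T). H n)"
      by (rule sum_mono2[OF _ sub]) (auto simp: nn finKT)
    also have "\<dots> = (\<Sum>x\<in>K \<times> T. H (\<phi> x))" by (rule sum.reindex[OF inj, unfolded comp_def])
    also have "\<dots> = (\<Sum>(k,r)\<in>K \<times> T. H (p^k) * H r)"
    proof (rule sum.cong[OF refl], clarsimp simp: \<phi>_def)
      fix k r assume "k \<in> K" "r \<in> T"
      then have "coprime (p^k) r" "r > 0" using ndvd pp by (auto simp: T_def prime_imp_coprime)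
      then show "H (p^k * r) = H (p^k) * H r" using mult p1 by simp
    qed
    also have "\<dots> = (\<Sum>k\<in>K. H (p^k)) * (\<Sum>r\<in>T. H r)"
      by (simp add: sum_product sum.cartesian_product)
    also have "\<dots> \<le> (\<Sum>k\<in>K. H (p^k)) * (\<Prod>p\<in>{p. prime p \<and> p \<le> m}. \<Sum>k\<le>N. H (p^k))"
      using Suc.IH by (intro mult_left_mono) (auto simp: T_def nn sum_nonneg)
    also have "\<dots> = (\<Prod>p\<in>{p. prime p \<and> p \<le> Suc m}. \<Sum>k\<le>N. H (p^k))"
    proof -
      have "{p. prime p \<and> p \<le> Suc m} = insert p {p. prime p \<and> p \<le> m}"
        using pp by (auto simp: p_def le_Suc_eq)
      then show ?thesis by (simp add: K_def p_def)
    qed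
    finally show ?thesis by (simp add: T'_def)
  qed
qed

lemma diff_sq_bound:
  fixes u v :: complex assumes "cmod u \<le> 1" "cmod v \<le> 1"
  shows "(cmod (v - u))^2 \<le> 2 * (1 - Re (u * cnj v))"
proof -
  have a: "Re u * Re u + Im u * Im u \<le> 1" using assms(1) cmod_power2[of u]
    by (metis abs_norm_cancel power2_eq_square power_le_one_iff norm_ge_zero)
  have b: "Re v * Re v + Im v * Im v \<le> 1" using assms(2) cmod_power2[of v]
    by (metis abs_norm_cancel power2_eq_square power_le_one_iff norm_ge_zero)
  have "(cmod (v - u))^2 = (Re v - Re u)*(Re v - Re u) + (Im v - Im u) * (Im v - Im u)"
    by (simp only: cmod_power2) (simp add: power2_eq_square)
  also have "\<dots> \<le> 2 * (1 - (Re u * Re v + Im u * Im v))" using a b by (simp add: algebra_simps)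
  also have "Re u * Re v + Im u * Im v = Re (u * cnj v)" by simp
  finally show ?thesis .
qed

lemma prime_sum_bound:
  fixes f g h :: "nat \<Rightarrow> complex" and \<beta> :: real
  assumes cf: "completely_multiplicative f" and cg: "completely_multiplicative g"
    and fb: "\<And>n. n > 0 \<Longrightarrow> cmod (f n) \<le> 1"
    and gb: "\<And>n. n > 0 \<Longrightarrow> cmod (g n) \<le> 1"
    and b0: "\<beta> > 0"
    and conv: "\<And>n. n > 0 \<Longrightarrow> g n = dirichlet_conv f h n"
    and p: "prime p"
  shows "(\<Sum>k\<le>N. (cmod (h (p^k)))^2 / real (p^k) powr \<beta>)
          \<le> 1 + 2 / (1 - 1 / 2 powr \<beta>) * pretent_term \<beta> f g p"
proof -
  define P where "P = real p powr \<beta>"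
  define q where "q = 1 / P"
  define q0 where "q0 = 1 / 2 powr \<beta>"
  define A where "A = (cmod (g p - f p))^2"
  have p2: "real p \<ge> 2" using prime_ge_2_nat[OF p] by simp
  have p0: "p > 0" using p prime_gt_0_nat by blast
  have two: "2 powr \<beta> > 1" using powr_less_mono2[OF b0, of 1 2] by simp
  have P2: "P \<ge> 2 powr \<beta>" unfolding P_def using p2 b0 by (intro powr_mono2) auto
  have Ppos: "P > 0" using P2 two by simp
  have q0lt: "q0 < 1" "q0 > 0" using two by (auto simp: q0_def)
  have qq0: "q \<le> q0" "q > 0" using P2 two Ppos by (auto simp: q_def q0_def intro: divide_left_mono)
  have qlt: "q < 1" using qq0 q0lt by simp
  have A0: "A \<ge> 0" by (simp add: A_def)
  have Ab: "A \<le> 2 * (1 - Re (f p * cnj (g p)))"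
    unfolding A_def by (rule diff_sq_bound[OF fb[OF p0] gb[OF p0]])
  have pt: "pretent_term \<beta> f g p = (1 - Re (f p * cnj (g p))) * q"
    by (simp add: pretent_term_def q_def P_def)
  have tm: "(cmod (h (p^Suc k)))^2 / real (p^Suc k) powr \<beta> \<le> A * q^Suc k" for k
  proof -
    have "h (p^Suc k) = g p ^ k * (g p - f p)" using h_primepow[OF cf cg conv p, of "Suc k"] by simp
    then have "cmod (h (p^Suc k)) = cmod (g p)^k * cmod (g p - f p)" by (simp add: norm_mult norm_power)
    also have "\<dots> \<le> cmod (g p - f p)"
      using gb[OF p0] by (intro mult_left_le_one_le) (auto simp: power_le_one)
    finally have c: "(cmod (h (p^Suc k)))^2 \<le> A" unfolding A_def by (intro power_mono) auto
    have "real (p^Suc k) powr \<beta> = P^Suc k"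
      unfolding P_def of_nat_power using p0 by (intro power_powr) simp
    then have "(cmod (h (p^Suc k)))^2 / real (p^Suc k) powr \<beta> = (cmod (h (p^Suc k)))^2 * q^Suc k"
      by (simp add: q_def power_one_over divide_inverse power_inverse)
    also have "\<dots> \<le> A * q^Suc k" using c qq0 by (intro mult_right_mono) auto
    finally show ?thesis .
  qed
  have "(\<Sum>k\<le>N. (cmod (h (p^k)))^2 / real (p^k) powr \<beta>)
     = 1 + (\<Sum>k<N. (cmod (h (p^Suc k)))^2 / real (p^Suc k) powr \<beta>)"
    using h_one[OF cf _ cg, of h] conv[of 1] by (subst sum.atMost_shift) simp
  also have "\<dots> \<le> 1 + (\<Sum>k<N. A * q^Suc k)"
    using tm by (intro add_left_mono sum_mono) auto
  also have "(\<Sum>k<N. A * q^Suc k) = A * q * (\<Sum>k<N. q^k)"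
    by (simp add: sum_distrib_left mult.assoc)
  also have "(\<Sum>k<N. q^k) = (1 - q^N) / (1 - q)" using qlt by (simp add: sum_gp_strict)
  also have "\<dots> \<le> 1 / (1 - q)" using qlt qq0 by (intro divide_right_mono) auto
  also have "\<dots> \<le> 1 / (1 - q0)" using qq0 q0lt by (intro divide_left_mono) auto
  finally have X: "(\<Sum>k\<le>N. (cmod (h (p^k)))^2 / real (p^k) powr \<beta>) \<le> 1 + A * q * (1 / (1 - q0))"
    using A0 qq0 by (simp add: mult_left_mono)
  have "A * q * (1 / (1 - q0)) \<le> 2 * (1 - Re (f p * cnj (g p))) * q * (1 / (1 - q0))"
    using Ab qq0 q0lt by (intro mult_right_mono) auto
  also have "\<dots> = 2 / (1 - q0) * pretent_term \<beta> f g p" by (simp add: pt)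
  finally show ?thesis using X by (simp add: q0_def)
qed

theorem lemma2:
  fixes f g h :: "nat \<Rightarrow> complex" and \<beta> :: real
  assumes "completely_multiplicative f" and "completely_multiplicative g"
    and "\<And>n. n > 0 \<Longrightarrow> cmod (f n) \<le> 1"
    and "\<And>n. n > 0 \<Longrightarrow> cmod (g n) \<le> 1"
    and "\<beta> > 0"
    and "pretent_dist_finite \<beta> f g"
    and "\<And>n. n > 0 \<Longrightarrow> g n = dirichlet_conv f h n"
  shows "(\<lambda>n. (cmod (h n))^2 / real n powr \<beta>) summable_on {1..}"
proof -
  note cf = assms(1) and cg = assms(2) and fb = assms(3) and gb = assms(4) and b0 = assms(5)
    and conv = assms(7)
  define H where "H = (\<lambda>n. (cmod (h n))^2 / real n powr \<beta>)"
  define C where "C = 2 / (1 - 1 / 2 powr \<beta>)"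
  define pt where "pt = pretent_term \<beta> f g"
  define S where "S = infsum pt {p. prime p}"
  have two: "2 powr \<beta> > 1" using powr_less_mono2[OF b0, of 1 2] by simp
  have C0: "C \<ge> 0" using two by (simp add: C_def field_simps)
  have summ: "pt summable_on {p. prime p}" using assms(6) by (simp add: pretent_dist_finite_def pt_def)
  have ptnn: "pt p \<ge> 0" if "prime p" for p
  proof -
    have p0: "p > 0" using that prime_gt_0_nat by blast
    have "Re (f p * cnj (g p)) \<le> cmod (f p * cnj (g p))" by (rule complex_Re_le_cmod)
    also have "\<dots> \<le> 1" using fb[OF p0] gb[OF p0] by (simp add: norm_mult mult_le_one)
    finally show ?thesis by (simp add: pt_def pretent_term_def)
  qed
  have Hnn: "H n \<ge> 0" for n by (simp add: H_def)
  have H1: "H 1 = 1" using h_one[OF cf _ cg, of h] conv[of 1] by (simp add: H_def)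
  have Hm: "H (a*b) = H a * H b" if "coprime a b" "a > 0" "b > 0" for a b
  proof -
    have "h (a*b) = h a * h b" by (rule h_mult[OF cf cg conv that])
    moreover have "real (a*b) powr \<beta> = real a powr \<beta> * real b powr \<beta>"
      by (simp add: powr_mult)
    ultimately show ?thesis by (simp add: H_def norm_mult power_mult_distrib)
  qed
  have bound: "(\<Sum>n\<in>{n. 0 < n \<and> n \<le> N \<and> (\<forall>q. prime q \<longrightarrow> q dvd n \<longrightarrow> q \<le> N)}. H n) \<le> exp (C * S)" for N
  proof -
    define P where "P = {p. prime p \<and> p \<le> N}"
    have finP: "finite P" unfolding P_def by (rule finite_subset[of _ "{..N}"]) auto
    have "(\<Sum>n\<in>{n. 0 < n \<and> n \<le> N \<and> (\<forall>q. prime q \<longrightarrow> q dvd n \<longrightarrow> q \<le> N)}. H n)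
          \<le> (\<Prod>p\<in>P. \<Sum>k\<le>N. H (p^k))"
      unfolding P_def by (rule euler_bound[OF Hnn H1 Hm])
    also have "\<dots> \<le> (\<Prod>p\<in>P. exp (C * pt p))"
    proof (rule prod_mono, safe)
      fix p assume "p \<in> P"
      then have pp: "prime p" by (simp add: P_def)
      show "0 \<le> (\<Sum>k\<le>N. H (p^k))" by (simp add: sum_nonneg Hnn)
      have "(\<Sum>k\<le>N. H (p^k)) \<le> 1 + C * pt p"
        using prime_sum_bound[OF cf cg fb gb b0 conv pp, of N]
        by (simp add: H_def C_def pt_def)
      also have "\<dots> \<le> exp (C * pt p)" by (rule exp_ge_add_one_self)
      finally show "(\<Sum>k\<le>N. H (p^k)) \<le> exp (C * pt p)" .
    qed
    also have "\<dots> = exp (C * (\<Sum>p\<in>P. pt p))" using finP by (simp add: exp_sum sum_distrib_left)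
    also have "\<dots> \<le> exp (C * S)"
    proof -
      have "(\<Sum>p\<in>P. pt p) \<le> S" unfolding S_def
        using finP ptnn by (intro finite_sum_le_infsum[OF summ]) (auto simp: P_def)
      then show ?thesis using C0 by (simp add: mult_left_mono)
    qed
    finally show ?thesis .
  qed
  have "H summable_on {1..}"
  proof (rule nonneg_bdd_above_summable_on)
    show "\<And>x. x \<in> {1..} \<Longrightarrow> 0 \<le> H x" using Hnn by simp
    show "bdd_above (sum H ` {F. F \<subseteq> {1..} \<and> finite F})"
    proof (rule bdd_aboveI2)
      fix F :: "nat set" assume F: "F \<in> {F. F \<subseteq> {1..} \<and> finite F}"
      define N where "N = Max (insert 0 F)"
      have finF: "finite F" using F by simp
      have le: "n \<le> N" if "n \<in> F" for n using finF that by (simp add: N_def)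
      have sub: "F \<subseteq> {n. 0 < n \<and> n \<le> N \<and> (\<forall>q. prime q \<longrightarrow> q dvd n \<longrightarrow> q \<le> N)}"
      proof
        fix n assume n: "n \<in> F"
        have n0: "n > 0" using n F by auto
        have "q \<le> N" if "q dvd n" for q using dvd_imp_le[OF that n0] le[OF n] by simp
        then show "n \<in> {n. 0 < n \<and> n \<le> N \<and> (\<forall>q. prime q \<longrightarrow> q dvd n \<longrightarrow> q \<le> N)}"
          using n0 le[OF n] by auto
      qed
      have finT: "finite {n. 0 < n \<and> n \<le> N \<and> (\<forall>q. prime q \<longrightarrow> q dvd n \<longrightarrow> q \<le> N)}"
        by (rule finite_subset[of _ "{..N}"]) auto
      have "sum H F \<le> (\<Sum>n\<in>{n. 0 < n \<and> n \<le> N \<and> (\<forall>q. prime q \<longrightarrow> q dvd n \<longrightarrow> q \<le> N)}. H n)"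
        by (rule sum_mono2[OF finT sub]) (simp add: Hnn)
      also have "\<dots> \<le> exp (C * S)" by (rule bound)
      finally show "sum H F \<le> exp (C * S)" .
    qed
  qed
  then show ?thesis by (simp add: H_def)
qed

end
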